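(* Let $\mathcal{X}$ be a non-degenerate fuzzy random variable with values in $\mathcal{F}_c(\mathbb{R})$ such that the real random variable $s_{\mathcal{X}}(u,\alpha)$ has a unique median for each $u\in\{-1,1\}$ and $\alpha\in[0,1]$. Then $\mathrm{Med}_s(\mathcal{X})=\mathrm{Med}(\mathcal{X};D_{FP})=\{\mathrm{med}_{Si}(\mathcal{X})\}=\{\mathrm{med}_{Gr}(\mathcal{X})\}$.
   Context: $\mathcal{F}_c(\mathbb{R})$ is the set of functions $A:\mathbb{R}\to[0,1]$ whose $\alpha$-levels $A_\alpha=\{x:A(x)\ge\alpha\}$ ($\alpha\in(0,1]$) and $A_0=\overline{\{x:A(x)>0\}}$ are non-empty compact intervals. Support function: $s_A(u,\alpha)=\sup\{uv:v\in A_\alpha\}$, $u\in\{-1,1\}$, $\alpha\in[0,1]$. A fuzzy random variable on $(\Omega,\mathcal{A},\mathbb{P})$ is a map $\mathcal{X}:\Omega\to\mathcal{F}_c(\mathbb{R})$ with each $\omega\mapsto\mathcal{X}(\omega)_\alpha$ a random compact set; $s_{\mathcal{X}}(u,\alpha)(\omega)=s_{\mathcal{X}(\omega)}(u,\alpha)$. Non-degenerate means not almost surely equal to a constant element of $\mathcal{F}_c(\mathbb{R})$. For a real random variable $X$, $\mathrm{Med}(X)=[\underline{\mathrm{med}}(X),\overline{\mathrm{med}}(X)]$ is its set of medians, $\mathrm{med}(X)$ its midpoint, $\mathrm{MAD}(X)=\mathrm{med}(|X-\mathrm{med}(X)|)$. $\mathrm{med}_{Si}(\mathcal{X})$ is the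 element of $\mathcal{F}_c(\mathbb{R})$ with $s_{\mathrm{med}_{Si}(\mathcal{X})}(u,\alpha)=\mathrm{med}(s_{\mathcal{X}}(u,\alpha))$ for all $u,\alpha$. $\mathrm{med}_{Gr}(\mathcal{X})$ (Grzegorzewski median) is the fuzzy number with membership $\mathrm{med}_{Gr}(\mathcal{X})(t)=\sup\{\inf_{\omega}\mathcal{X}(\omega)(X(\omega)): X:\Omega\to\mathbb{R}\text{ Borel measurable},\ t\in\mathrm{Med}(X)\}$; equivalently $(\mathrm{med}_{Gr}(\mathcal{X}))_\alpha=[\underline{\mathrm{med}}(\inf\mathcal{X}_\alpha),\overline{\mathrm{med}}(\sup\mathcal{X}_\alpha)]$ for all $\alpha$. $\mathrm{Med}_s(\mathcal{X})$ is the set of $A\in\mathcal{F}_c(\mathbb{R})$ with $s_A(u,\alpha)\in\mathrm{Med}(s_{\mathcal{X}}(u,\alpha))$ for all $u,\alpha$. $D_{FP}(A;\mathcal{X})=(1+O(A;\mathcal{X}))^{-1}$ with $O(A;\mathcal{X})=\sup_{(u,\alpha)}\frac{|s_A(u,\alpha)-\mathrm{med}(s_{\mathcal{X}}(u,\alpha))|}{\mathrm{MAD}(s_{\mathcal{X}}(u,\alpha))}$, and $\mathrm{Med}(\mathcal{X};D_{FP})$ is the set of maximizers of $D_{FP}(\cdot;\mathcal{X})$ over $\mathcal{F}_c(\mathbb{R})$. *)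

theory Defs
  imports "HOL-Probability.Probability"
begin

definition level :: "(real \<Rightarrow> real) \<Rightarrow> real \<Rightarrow> real set" where
  "level A \<alpha> = (if \<alpha> = 0 then closure {x. A x > 0} else {x. A x \<ge> \<alpha>})"

definition is_cinterval :: "real set \<Rightarrow> bool" where
  "is_cinterval S \<longleftrightarrow> (\<exists>a b. a \<le> b \<and> S = {a..b})"

definition Fc :: "(real \<Rightarrow> real) set" where
  "Fc = {A. (\<forall>x. 0 \<le> A x \<and> A x \<le> 1) \<and> (\<forall>\<alpha>\<in>{0..1}. is_cinterval (level A \<alpha>))}"

text \<open>Support function, u ranging over {-1,1}.\<close>
definition supp_fun :: "(real \<Rightarrow> real) \<Rightarrow> real \<Rightarrow> real \<Rightarrow> real" where
  "supp_fun A u \<alpha> = Sup ((\<lambda>v. u * v) ` level A \<alpha>)"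

definition random_compact_set :: "'w measure \<Rightarrow> ('w \<Rightarrow> real set) \<Rightarrow> bool" where
  "random_compact_set M F \<longleftrightarrow> (\<forall>\<omega>\<in>space M. compact (F \<omega>) \<and> F \<omega> \<noteq> {}) \<and>
     (\<forall>K. compact K \<longrightarrow> {\<omega>\<in>space M. F \<omega> \<inter> K \<noteq> {}} \<in> sets M)"

definition fuzzy_random_variable :: "'w measure \<Rightarrow> ('w \<Rightarrow> real \<Rightarrow> real) \<Rightarrow> bool" where
  "fuzzy_random_variable M X \<longleftrightarrow> (\<forall>\<omega>\<in>space M. X \<omega> \<in> Fc) \<and>
     (\<forall>\<alpha>\<in>{0..1}. random_compact_set M (\<lambda>\<omega>. level (X \<omega>) \<alpha>))"

definition non_degenerate :: "'w measure \<Rightarrow> ('w \<Rightarrow> real \<Rightarrow> real) \<Rightarrow> bool" where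
  "non_degenerate M X \<longleftrightarrow> \<not> (\<exists>A\<in>Fc. AE \<omega> in M. X \<omega> = A)"

definition sX :: "('w \<Rightarrow> real \<Rightarrow> real) \<Rightarrow> real \<Rightarrow> real \<Rightarrow> 'w \<Rightarrow> real" where
  "sX X u \<alpha> = (\<lambda>\<omega>. supp_fun (X \<omega>) u \<alpha>)"

definition Med :: "'w measure \<Rightarrow> ('w \<Rightarrow> real) \<Rightarrow> real set" where
  "Med M Y = {m. measure M {\<omega>\<in>space M. Y \<omega> \<le> m} \<ge> 1/2 \<and> measure M {\<omega>\<in>space M. Y \<omega> \<ge> m} \<ge> 1/2}"

definition med :: "'w measure \<Rightarrow> ('w \<Rightarrow> real) \<Rightarrow> real" where
  "med M Y = (Inf (Med M Y) + Sup (Med M Y)) / 2"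

definition MAD :: "'w measure \<Rightarrow> ('w \<Rightarrow> real) \<Rightarrow> real" where
  "MAD M Y = med M (\<lambda>\<omega>. \<bar>Y \<omega> - med M Y\<bar>)"

definition med_Si :: "'w measure \<Rightarrow> ('w \<Rightarrow> real \<Rightarrow> real) \<Rightarrow> real \<Rightarrow> real" where
  "med_Si M X = (THE A. A \<in> Fc \<and>
     (\<forall>u\<in>{-1,1}. \<forall>\<alpha>\<in>{0..1}. supp_fun A u \<alpha> = med M (sX X u \<alpha>)))"

definition med_Gr :: "'w measure \<Rightarrow> ('w \<Rightarrow> real \<Rightarrow> real) \<Rightarrow> real \<Rightarrow> real" where
  "med_Gr M X t = Sup {Inf ((\<lambda>\<omega>. X \<omega> (Y \<omega>)) ` space M) | Y.
                        Y \<in> borel_measurable M \<and> t \<in> Med M Y}"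

definition Med_s :: "'w measure \<Rightarrow> ('w \<Rightarrow> real \<Rightarrow> real) \<Rightarrow> (real \<Rightarrow> real) set" where
  "Med_s M X = {A \<in> Fc. \<forall>u\<in>{-1,1}. \<forall>\<alpha>\<in>{0..1}. supp_fun A u \<alpha> \<in> Med M (sX X u \<alpha>)}"

text \<open>Outlyingness: the quotient |d|/MAD is read in the extended reals,
  with d/0 = \<infinity> for d \<noteq> 0 and 0/0 = 0.\<close>
definition ratio_ereal :: "real \<Rightarrow> real \<Rightarrow> ereal" where
  "ratio_ereal d m = (if m = 0 then (if d = 0 then 0 else \<infinity>) else ereal (d / m))"

definition Outl :: "'w measure \<Rightarrow> (real \<Rightarrow> real) \<Rightarrow> ('w \<Rightarrow> real \<Rightarrow> real) \<Rightarrow> ereal" where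
  "Outl M A X = (SUP p\<in>{-1,1::real} \<times> {0..1::real}.
      ratio_ereal \<bar>supp_fun A (fst p) (snd p) - med M (sX X (fst p) (snd p))\<bar>
                  (MAD M (sX X (fst p) (snd p))))"

definition D_FP :: "'w measure \<Rightarrow> (real \<Rightarrow> real) \<Rightarrow> ('w \<Rightarrow> real \<Rightarrow> real) \<Rightarrow> ereal" where
  "D_FP M A X = 1 / (1 + Outl M A X)"

definition Med_DFP :: "'w measure \<Rightarrow> ('w \<Rightarrow> real \<Rightarrow> real) \<Rightarrow> (real \<Rightarrow> real) set" where
  "Med_DFP M X = {A \<in> Fc. \<forall>B\<in>Fc. D_FP M B X \<le> D_FP M A X}"

end

theory Submission
  imports Defs
begin

context prob_space begin

lemma dec_half:
  assumes "range S \<subseteq> events" "decseq S" "\<And>n. prob (S n) \<ge> 1/2"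
    "(\<Inter>n. S n) \<subseteq> T" "T \<in> events"
  shows "prob T \<ge> 1/2"
proof -
  have "(\<lambda>n. prob (S n)) \<longlonglongrightarrow> prob (\<Inter>n. S n)"
    using finite_Lim_measure_decseq[OF assms(1,2)] .
  then have "1/2 \<le> prob (\<Inter>n. S n)"
    by (rule LIMSEQ_le_const) (use assms(3) in auto)
  also have "\<dots> \<le> prob T" using assms(4,5) by (rule finite_measure_mono)
  finally show ?thesis .
qed

lemma Med_cong:
  assumes "\<And>w. w \<in> space M \<Longrightarrow> Y w = Z w"
  shows "Med M Y = Med M Z"
  unfolding Med_def using assms
  by (smt (verit, best) Collect_cong)

lemma Med_uminus_iff: "m \<in> Med M (\<lambda>w. - Y w) \<longleftrightarrow> - m \<in> Med M Y"
  unfolding Med_def by (simp add: neg_le_iff_le minus_le_iff le_minus_iff conj_commute)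

lemma Med_uminus_single:
  assumes "Med M (\<lambda>w. - Y w) = {c}" shows "Med M Y = {-c}"
proof -
  have "m \<in> Med M Y \<longleftrightarrow> m = -c" for m
    using Med_uminus_iff[of "-m" Y] assms by auto
  then show ?thesis by auto
qed

lemma med_single: "Med M Y = {m} \<Longrightarrow> med M Y = m"
  unfolding med_def by simp

lemma meas_le: fixes Y :: "'a \<Rightarrow> real" assumes "Y \<in> borel_measurable M" shows "{w\<in>space M. Y w \<le> c} \<in> events"
  using borel_measurable_iff_le[THEN iffD1, OF assms] by blast
lemma meas_ge: fixes Y :: "'a \<Rightarrow> real" assumes "Y \<in> borel_measurable M" shows "{w\<in>space M. c \<le> Y w} \<in> events"
  using borel_measurable_iff_ge[THEN iffD1, OF assms] by blast

lemma med_compare: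
  fixes Y Z :: "'a \<Rightarrow> real"
  assumes Y: "Y \<in> borel_measurable M" and Z: "Z \<in> borel_measurable M"
    and le: "\<And>w. w \<in> space M \<Longrightarrow> Y w \<le> Z w"
    and MY: "Med M Y = {a}" and MZ: "Med M Z = {b}"
  shows "a \<le> b"
proof (rule ccontr)
  assume "\<not> a \<le> b"
  have "b \<in> Med M Z" using MZ by auto
  then have h1: "prob {w\<in>space M. Z w \<le> b} \<ge> 1/2" unfolding Med_def by auto
  have "prob {w\<in>space M. Z w \<le> b} \<le> prob {w\<in>space M. Y w \<le> b}"
    using le by (intro finite_measure_mono meas_le[OF Y]) (auto intro: order_trans)
  moreover have "a \<in> Med M Y" using MY by auto
  then have "prob {w\<in>space M. a \<le> Y w} \<ge> 1/2" unfolding Med_def by auto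
  moreover have "prob {w\<in>space M. a \<le> Y w} \<le> prob {w\<in>space M. b \<le> Y w}"
    using \<open>\<not> a \<le> b\<close> by (intro finite_measure_mono meas_ge[OF Y]) auto
  ultimately have "b \<in> Med M Y" using h1 unfolding Med_def by auto
  then show False using MY \<open>\<not> a \<le> b\<close> by auto
qed


lemma small_upper:
  fixes Y Z :: "'a \<Rightarrow> real"
  assumes Y: "Y \<in> borel_measurable M"
  shows "\<exists>B. prob {w\<in>space M. B \<le> Y w} < 1/2"
proof -
  define S where "S n = {w\<in>space M. real n \<le> Y w}" for n :: nat
  have "range S \<subseteq> events" unfolding S_def using meas_ge[OF Y] by auto
  moreover have "decseq S" unfolding S_def decseq_def
    by (auto intro: order_trans)
  ultimately have "(\<lambda>n. prob (S n)) \<longlonglongrightarrow> prob (\<Inter>n. S n)"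
    by (rule finite_Lim_measure_decseq)
  moreover have "(\<Inter>n. S n) = {}"
  proof -
    have "w \<notin> (\<Inter>n. S n)" for w
    proof
      assume "w \<in> (\<Inter>n. S n)"
      obtain n where "Y w < real n" using reals_Archimedean2 by blast
      moreover have "w \<in> S n" using \<open>w \<in> (\<Inter>n. S n)\<close> by blast
      then have "real n \<le> Y w" unfolding S_def by auto
      ultimately show False by simp
    qed
    then show ?thesis by auto
  qed
  ultimately have "(\<lambda>n. prob (S n)) \<longlonglongrightarrow> 0" by simp
  then have "eventually (\<lambda>n. prob (S n) < 1/2) sequentially"
    by (rule order_tendstoD) simp
  then obtain n where "prob (S n) < 1/2" by (auto simp: eventually_sequentially)
  then show ?thesis unfolding S_def by blast
qed

lemma small_lower:
  fixes Y Z :: "'a \<Rightarrow> real"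
  assumes Y: "Y \<in> borel_measurable M"
  shows "\<exists>B. prob {w\<in>space M. Y w \<le> B} < 1/2"
proof -
  have "(\<lambda>w. - Y w) \<in> borel_measurable M" using Y by measurable
  from small_upper[OF this] obtain B where "prob {w\<in>space M. B \<le> - Y w} < 1/2" by blast
  moreover have "{w\<in>space M. B \<le> - Y w} = {w\<in>space M. Y w \<le> -B}" by auto
  ultimately show ?thesis by auto
qed

lemma big_lower:
  fixes Y Z :: "'a \<Rightarrow> real"
  assumes Y: "Y \<in> borel_measurable M"
  shows "\<exists>x. prob {w\<in>space M. Y w \<le> x} \<ge> 1/2"
proof -
  from small_upper[OF Y] obtain B where B: "prob {w\<in>space M. B \<le> Y w} < 1/2" by blast
  have "{w\<in>space M. Y w \<le> B} \<supseteq> space M - {w\<in>space M. B \<le> Y w}" by auto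
  then have "prob {w\<in>space M. Y w \<le> B} \<ge> prob (space M - {w\<in>space M. B \<le> Y w})"
    by (intro finite_measure_mono meas_le[OF Y])
  moreover have "prob (space M - {w\<in>space M. B \<le> Y w}) = 1 - prob {w\<in>space M. B \<le> Y w}"
    by (rule prob_compl) (rule meas_ge[OF Y])
  ultimately show ?thesis using B by (intro exI[of _ B]) linarith
qed

lemma Med_nonempty:
  fixes Y Z :: "'a \<Rightarrow> real"
  assumes Y: "Y \<in> borel_measurable M"
  shows "Med M Y \<noteq> {}"
proof -
  define T where "T = {x. prob {w\<in>space M. Y w \<le> x} \<ge> 1/2}"
  obtain x0 where x0: "x0 \<in> T" using big_lower[OF Y] unfolding T_def by blast
  obtain B where B: "prob {w\<in>space M. Y w \<le> B} < 1/2" using small_lower[OF Y] by blast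
  have upT: "y \<in> T" if "x \<in> T" "x \<le> y" for x y
  proof -
    have "prob {w\<in>space M. Y w \<le> x} \<le> prob {w\<in>space M. Y w \<le> y}"
      using that(2) by (intro finite_measure_mono meas_le[OF Y]) auto
    then show ?thesis using that(1) unfolding T_def by auto
  qed
  have bdd: "bdd_below T"
  proof (rule bdd_belowI)
    fix x assume "x \<in> T"
    show "B \<le> x"
    proof (rule ccontr)
      assume "\<not> B \<le> x"
      then have "B \<in> T" using upT[OF \<open>x \<in> T\<close>] by auto
      then show False using B unfolding T_def by auto
    qed
  qed
  define m where "m = Inf T"
  have "prob {w\<in>space M. Y w \<le> m} \<ge> 1/2"
  proof (rule dec_half)
    define S where "S n = {w\<in>space M. Y w \<le> m + 1 / (real n + 1)}" for n :: nat
    show "range S \<subseteq> events" unfolding S_def using meas_le[OF Y] by auto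
    show "decseq S" unfolding S_def decseq_def
      by (auto simp: frac_le intro: order_trans)
    show "prob (S n) \<ge> 1/2" for n
    proof -
      have "Inf T < m + 1 / (real n + 1)" unfolding m_def by simp
      then obtain x where "x \<in> T" "x < m + 1 / (real n + 1)"
        using cInf_less_iff[of T] x0 bdd by auto
      then have "m + 1 / (real n + 1) \<in> T" using upT by auto
      then show ?thesis unfolding T_def S_def by auto
    qed
    show "(\<Inter>n. S n) \<subseteq> {w\<in>space M. Y w \<le> m}"
    proof
      fix w assume w: "w \<in> (\<Inter>n. S n)"
      then have "w \<in> space M" unfolding S_def by auto
      have "Y w \<le> m"
      proof (rule ccontr)
        assume "\<not> Y w \<le> m"
        then obtain n where "inverse (real (Suc n)) < Y w - m"
          using reals_Archimedean[of "Y w - m"] by auto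
        then have "\<not> Y w \<le> m + 1 / (real n + 1)" by (simp add: field_simps)
        then show False using w unfolding S_def by auto
      qed
      then show "w \<in> {w\<in>space M. Y w \<le> m}" using \<open>w \<in> space M\<close> by auto
    qed
    show "{w\<in>space M. Y w \<le> m} \<in> events" by (rule meas_le[OF Y])
  qed
  moreover have "prob {w\<in>space M. m \<le> Y w} \<ge> 1/2"
  proof (rule dec_half)
    define S where "S n = space M - {w\<in>space M. Y w \<le> m - 1 / (real n + 1)}" for n :: nat
    show "range S \<subseteq> events" unfolding S_def using meas_le[OF Y] by auto
    show "decseq S" unfolding S_def decseq_def
      by (auto simp: frac_le intro: order_trans)
    show "prob (S n) \<ge> 1/2" for n
    proof -
      have "m - 1 / (real n + 1) \<notin> T"
      proof
        assume "m - 1 / (real n + 1) \<in> T"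
        then have "m \<le> m - 1 / (real n + 1)" unfolding m_def using cInf_lower[OF _ bdd] by blast
        then show False by (simp add: field_simps)
      qed
      then have "prob {w\<in>space M. Y w \<le> m - 1 / (real n + 1)} < 1/2" unfolding T_def by auto
      moreover have "prob (S n) = 1 - prob {w\<in>space M. Y w \<le> m - 1 / (real n + 1)}"
        unfolding S_def by (rule prob_compl) (rule meas_le[OF Y])
      ultimately show ?thesis by linarith
    qed
    show "(\<Inter>n. S n) \<subseteq> {w\<in>space M. m \<le> Y w}"
    proof
      fix w assume w: "w \<in> (\<Inter>n. S n)"
      then have "w \<in> space M" unfolding S_def by auto
      have "m \<le> Y w"
      proof (rule ccontr)
        assume "\<not> m \<le> Y w"
        then obtain n where "inverse (real (Suc n)) < m - Y w"
          using reals_Archimedean[of "m - Y w"] by auto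
        then have "Y w \<le> m - 1 / (real n + 1)" by (simp add: field_simps)
        then show False using w \<open>w \<in> space M\<close> unfolding S_def by auto
      qed
      then show "w \<in> {w\<in>space M. m \<le> Y w}" using \<open>w \<in> space M\<close> by auto
    qed
    show "{w\<in>space M. m \<le> Y w} \<in> events" by (rule meas_ge[OF Y])
  qed
  ultimately have "m \<in> Med M Y" unfolding Med_def by auto
  then show ?thesis by auto
qed

lemma Med_bdd_above:
  fixes Y Z :: "'a \<Rightarrow> real"
  assumes Y: "Y \<in> borel_measurable M"
  shows "bdd_above (Med M Y)"
proof -
  from small_upper[OF Y] obtain B where B: "prob {w\<in>space M. B \<le> Y w} < 1/2" by blast
  show ?thesis
  proof (rule bdd_aboveI)
    fix x assume x: "x \<in> Med M Y"
    show "x \<le> B"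
    proof (rule ccontr)
      assume "\<not> x \<le> B"
      then have "prob {w\<in>space M. x \<le> Y w} \<le> prob {w\<in>space M. B \<le> Y w}"
        by (intro finite_measure_mono meas_ge[OF Y]) auto
      then show False using x B unfolding Med_def by auto
    qed
  qed
qed

lemma med_nonneg:
  fixes Y Z :: "'a \<Rightarrow> real"
  assumes Y: "Y \<in> borel_measurable M" and nn: "\<And>w. w \<in> space M \<Longrightarrow> Y w \<ge> 0"
  shows "med M Y \<ge> 0"
proof -
  have ge0: "x \<ge> 0" if "x \<in> Med M Y" for x
  proof (rule ccontr)
    assume "\<not> x \<ge> 0"
    then have e: "{w\<in>space M. Y w \<le> x} = {}" using nn by force
    have "prob {w\<in>space M. Y w \<le> x} = 0" unfolding e by simp
    then show False using that unfolding Med_def by auto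
  qed
  obtain x where x: "x \<in> Med M Y" using Med_nonempty[OF Y] by auto
  have "Inf (Med M Y) \<ge> 0" using Med_nonempty[OF Y] ge0 by (intro cInf_greatest) auto
  moreover have "Sup (Med M Y) \<ge> x" using x Med_bdd_above[OF Y] by (intro cSup_upper)
  ultimately show ?thesis unfolding med_def using ge0[OF x] by simp
qed

end


lemma Fc_level:
  assumes "A \<in> Fc" "\<alpha> \<in> {0..1}"
  shows "level A \<alpha> = {Inf (level A \<alpha>)..Sup (level A \<alpha>)} \<and> Inf (level A \<alpha>) \<le> Sup (level A \<alpha>)"
proof -
  from assms obtain l h where "l \<le> h" "level A \<alpha> = {l..h}"
    unfolding Fc_def is_cinterval_def by blast
  then show ?thesis by simp
qed

lemma supp_interval:
  assumes "level A \<alpha> = {l..h}" "l \<le> h"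
  shows "supp_fun A (-1) \<alpha> = - l" "supp_fun A 1 \<alpha> = h"
proof -
  show "supp_fun A (-1) \<alpha> = - l"
    unfolding supp_fun_def assms(1)
    by (rule cSup_eq_maximum) (use assms(2) in auto)
  show "supp_fun A 1 \<alpha> = h"
    unfolding supp_fun_def assms(1) using assms(2) by simp
qed

lemma level_mono:
  assumes "0 \<le> \<alpha>" "\<alpha> \<le> \<beta>"
  shows "level A \<beta> \<subseteq> level A \<alpha>"
proof (cases "\<alpha> = 0")
  case True
  show ?thesis
  proof (cases "\<beta> = 0")
    case False
    then have "level A \<beta> \<subseteq> {x. A x > 0}" unfolding level_def using assms True by auto
    also have "\<dots> \<subseteq> closure {x. A x > 0}" by (rule closure_subset)
    finally show ?thesis unfolding level_def using True by simp
  qed (use True in simp)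
next
  case False
  then show ?thesis unfolding level_def using assms by auto
qed

lemma Fc_lo_hi_mono:
  assumes "A \<in> Fc" "0 \<le> \<alpha>" "\<alpha> \<le> \<beta>" "\<beta> \<le> 1"
  shows "Inf (level A \<alpha>) \<le> Inf (level A \<beta>) \<and> Sup (level A \<beta>) \<le> Sup (level A \<alpha>)"
proof -
  have a: "\<alpha> \<in> {0..1}" and b: "\<beta> \<in> {0..1}" using assms by auto
  have "level A \<beta> \<subseteq> level A \<alpha>" using level_mono assms by blast
  then show ?thesis using Fc_level[OF assms(1) a] Fc_level[OF assms(1) b]
    by (metis atLeastatMost_subset_iff not_le)
qed

lemma Fc_le:
  assumes "A \<in> Fc" "B \<in> Fc" "\<forall>\<alpha>\<in>{0..1}. level A \<alpha> = level B \<alpha>"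
  shows "A x \<le> B x"
proof (cases "A x \<le> 0")
  case True
  then show ?thesis using assms(2) unfolding Fc_def by (smt (verit) mem_Collect_eq)
next
  case False
  then have ax: "A x \<in> {0..1}" "A x \<noteq> 0" using assms(1) unfolding Fc_def by auto
  have "x \<in> level A (A x)" unfolding level_def using ax by simp
  then have "x \<in> level B (A x)" using assms(3) ax by auto
  then show ?thesis unfolding level_def using ax by simp
qed

lemma Fc_eq:
  assumes "A \<in> Fc" "B \<in> Fc" "\<forall>\<alpha>\<in>{0..1}. level A \<alpha> = level B \<alpha>"
  shows "A = B"
proof
  fix x show "A x = B x"
    using Fc_le[OF assms] Fc_le[OF assms(2,1)] assms(3) by (metis order.antisym)
qed

lemma Fc_eq_supp:
  assumes "A \<in> Fc" "B \<in> Fc"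
    and "\<forall>\<alpha>\<in>{0..1}. supp_fun A (-1) \<alpha> = supp_fun B (-1) \<alpha> \<and> supp_fun A 1 \<alpha> = supp_fun B 1 \<alpha>"
  shows "A = B"
proof (rule Fc_eq[OF assms(1,2)], intro ballI)
  fix \<alpha> :: real assume a: "\<alpha> \<in> {0..1}"
  have LA: "level A \<alpha> = {Inf (level A \<alpha>)..Sup (level A \<alpha>)}" "Inf (level A \<alpha>) \<le> Sup (level A \<alpha>)"
    using Fc_level[OF assms(1) a] by auto
  have LB: "level B \<alpha> = {Inf (level B \<alpha>)..Sup (level B \<alpha>)}" "Inf (level B \<alpha>) \<le> Sup (level B \<alpha>)"
    using Fc_level[OF assms(2) a] by auto
  have "Inf (level A \<alpha>) = Inf (level B \<alpha>)" "Sup (level A \<alpha>) = Sup (level B \<alpha>)"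
    using supp_interval[OF LA] supp_interval[OF LB] assms(3) a by auto
  then show "level A \<alpha> = level B \<alpha>" using LA LB by metis
qed

lemma level_left_cont:
  assumes "A \<in> Fc" "0 < \<alpha>" "\<alpha> \<le> 1" "closed C"
    and ne: "\<And>n::nat. level A (\<alpha> - \<alpha> / (real n + 2)) \<inter> C \<noteq> {}"
  shows "level A \<alpha> \<inter> C \<noteq> {}"
proof -
  define \<beta> where "\<beta> n = \<alpha> - \<alpha> / (real n + 2)" for n :: nat
  have bpos: "0 < \<beta> n" "\<beta> n \<le> 1" for n
  proof -
    have "\<alpha> / (real n + 2) < \<alpha>" using assms(2) by (simp add: divide_less_eq)
    moreover have "\<alpha> / (real n + 2) > 0" using assms(2) by simp
    ultimately show "0 < \<beta> n" "\<beta> n \<le> 1" unfolding \<beta>_def using assms(3) by auto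
  qed
  define K where "K n = level A (\<beta> n) \<inter> C" for n
  have "\<Inter>(range K) \<noteq> {}"
  proof (rule compact_nest)
    fix n
    have "level A (\<beta> n) = {Inf (level A (\<beta> n))..Sup (level A (\<beta> n))}"
      using Fc_level[OF assms(1), of "\<beta> n"] bpos[of n] by auto
    then have "compact (level A (\<beta> n))" by (metis compact_Icc)
    then show "compact (K n)" unfolding K_def using assms(4) by (rule compact_Int_closed)
    show "K n \<noteq> {}" unfolding K_def \<beta>_def by (rule ne)
  next
    fix m n :: nat assume "m \<le> n"
    then have "\<alpha> / (real n + 2) \<le> \<alpha> / (real m + 2)"
      using assms(2) by (intro divide_left_mono) auto
    then have "\<beta> m \<le> \<beta> n" unfolding \<beta>_def by simp
    then show "K n \<subseteq> K m" unfolding K_def using level_mono[of "\<beta> m" "\<beta> n" A] bpos[of m] by auto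
  qed
  then obtain x where x: "\<And>n. x \<in> K n" by blast
  have "A x \<ge> \<alpha>"
  proof (rule ccontr)
    assume "\<not> A x \<ge> \<alpha>"
    then have d: "\<alpha> - A x > 0" by simp
    obtain n where n: "\<alpha> / (\<alpha> - A x) < real n" using reals_Archimedean2 by blast
    then have "\<alpha> < real n * (\<alpha> - A x)" using d by (simp add: divide_less_eq)
    also have "\<dots> \<le> (real n + 2) * (\<alpha> - A x)" using d by (intro mult_right_mono) auto
    finally have "\<alpha> / (real n + 2) < \<alpha> - A x" by (simp add: divide_less_eq mult.commute)
    then have "A x < \<beta> n" unfolding \<beta>_def by simp
    moreover have "x \<in> level A (\<beta> n)" using x[of n] unfolding K_def by auto
    then have "A x \<ge> \<beta> n" unfolding level_def using bpos[of n] by auto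
    ultimately show False by simp
  qed
  then have "x \<in> level A \<alpha>" unfolding level_def using assms(2) by auto
  moreover have "x \<in> C" using x[of 0] unfolding K_def by auto
  ultimately show ?thesis by auto
qed

lemma level0_sub:
  assumes "closed C" and sub: "\<And>n::nat. level A (1 / (real n + 1)) \<subseteq> C"
  shows "level A 0 \<subseteq> C"
proof -
  have "{x. A x > 0} \<subseteq> C"
  proof
    fix x assume "x \<in> {x. A x > 0}"
    then have "A x > 0" by simp
    then obtain n where "inverse (real (Suc n)) < A x" using reals_Archimedean by blast
    then have "1 / (real n + 1) \<le> A x" by (simp add: field_simps)
    then have "x \<in> level A (1 / (real n + 1))" unfolding level_def by simp
    then show "x \<in> C" using sub by blast
  qed
  then show ?thesis unfolding level_def using assms(1) by (simp add: closure_minimal)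
qed



locale frv = prob_space M for M :: "'w measure" +
  fixes X :: "'w \<Rightarrow> real \<Rightarrow> real"
  assumes frv: "fuzzy_random_variable M X"
    and uniq: "\<forall>u\<in>{-1,1::real}. \<forall>\<alpha>\<in>{0..1::real}. \<exists>m. Med M (sX X u \<alpha>) = {m}"
begin

definition lo :: "real \<Rightarrow> 'w \<Rightarrow> real" where "lo \<alpha> w = Inf (level (X w) \<alpha>)"
definition hi :: "real \<Rightarrow> 'w \<Rightarrow> real" where "hi \<alpha> w = Sup (level (X w) \<alpha>)"
definition a :: "real \<Rightarrow> real" where "a \<alpha> = - med M (sX X (-1) \<alpha>)"
definition b :: "real \<Rightarrow> real" where "b \<alpha> = med M (sX X 1 \<alpha>)"

lemma XFc: "w \<in> space M \<Longrightarrow> X w \<in> Fc"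
  using frv unfolding fuzzy_random_variable_def by auto

lemma lev: "w \<in> space M \<Longrightarrow> \<alpha> \<in> {0..1} \<Longrightarrow> level (X w) \<alpha> = {lo \<alpha> w..hi \<alpha> w} \<and> lo \<alpha> w \<le> hi \<alpha> w"
  unfolding lo_def hi_def using Fc_level[OF XFc] by blast

lemma hit: "\<alpha> \<in> {0..1} \<Longrightarrow> compact K \<Longrightarrow> {w\<in>space M. level (X w) \<alpha> \<inter> K \<noteq> {}} \<in> sets M"
  using frv unfolding fuzzy_random_variable_def random_compact_set_def by auto

lemma lo_meas: assumes "\<alpha> \<in> {0..1}" shows "lo \<alpha> \<in> borel_measurable M"
proof (subst borel_measurable_iff_le, intro allI)
  fix c
  have "{w\<in>space M. lo \<alpha> w \<le> c} = (\<Union>n::nat. {w\<in>space M. level (X w) \<alpha> \<inter> {c - real n..c} \<noteq> {}})"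
  proof (intro set_eqI iffI)
    fix w assume w: "w \<in> {w\<in>space M. lo \<alpha> w \<le> c}"
    obtain n where n: "c - lo \<alpha> w < real n" using reals_Archimedean2 by blast
    have "lo \<alpha> w \<in> level (X w) \<alpha> \<inter> {c - real n..c}" using lev[of w \<alpha>] w n assms by auto
    then show "w \<in> (\<Union>n::nat. {w\<in>space M. level (X w) \<alpha> \<inter> {c - real n..c} \<noteq> {}})" using w by blast
  next
    fix w assume "w \<in> (\<Union>n::nat. {w\<in>space M. level (X w) \<alpha> \<inter> {c - real n..c} \<noteq> {}})"
    then obtain n y where "w \<in> space M" "y \<in> level (X w) \<alpha>" "y \<le> c" by auto
    then show "w \<in> {w\<in>space M. lo \<alpha> w \<le> c}" using lev[of w \<alpha>] assms by auto
  qed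
  also have "\<dots> \<in> sets M" using hit[OF assms] by (intro sets.countable_UN) auto
  finally show "{w\<in>space M. lo \<alpha> w \<le> c} \<in> sets M" .
qed

lemma hi_meas: assumes "\<alpha> \<in> {0..1}" shows "hi \<alpha> \<in> borel_measurable M"
proof (subst borel_measurable_iff_ge, intro allI)
  fix c
  have "{w\<in>space M. c \<le> hi \<alpha> w} = (\<Union>n::nat. {w\<in>space M. level (X w) \<alpha> \<inter> {c..c + real n} \<noteq> {}})"
  proof (intro set_eqI iffI)
    fix w assume w: "w \<in> {w\<in>space M. c \<le> hi \<alpha> w}"
    obtain n where n: "hi \<alpha> w - c < real n" using reals_Archimedean2 by blast
    have "hi \<alpha> w \<in> level (X w) \<alpha> \<inter> {c..c + real n}" using lev[of w \<alpha>] w n assms by auto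
    then show "w \<in> (\<Union>n::nat. {w\<in>space M. level (X w) \<alpha> \<inter> {c..c + real n} \<noteq> {}})" using w by blast
  next
    fix w assume "w \<in> (\<Union>n::nat. {w\<in>space M. level (X w) \<alpha> \<inter> {c..c + real n} \<noteq> {}})"
    then obtain n y where "w \<in> space M" "y \<in> level (X w) \<alpha>" "c \<le> y" by auto
    then show "w \<in> {w\<in>space M. c \<le> hi \<alpha> w}" using lev[of w \<alpha>] assms by auto
  qed
  also have "\<dots> \<in> sets M" using hit[OF assms] by (intro sets.countable_UN) auto
  finally show "{w\<in>space M. c \<le> hi \<alpha> w} \<in> sets M" .
qed

lemma sX_lo: "\<alpha> \<in> {0..1} \<Longrightarrow> w \<in> space M \<Longrightarrow> sX X (-1) \<alpha> w = - lo \<alpha> w"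
  unfolding sX_def using supp_interval(1)[of "X w" \<alpha>] lev[of w \<alpha>] by auto

lemma sX_hi: "\<alpha> \<in> {0..1} \<Longrightarrow> w \<in> space M \<Longrightarrow> sX X 1 \<alpha> w = hi \<alpha> w"
  unfolding sX_def using supp_interval(2)[of "X w" \<alpha>] lev[of w \<alpha>] by auto

lemma sX_meas: "u \<in> {-1,1} \<Longrightarrow> \<alpha> \<in> {0..1} \<Longrightarrow> sX X u \<alpha> \<in> borel_measurable M"
proof -
  assume u: "u \<in> {-1,1}" and al: "\<alpha> \<in> {0..1}"
  have m1: "(\<lambda>w. - lo \<alpha> w) \<in> borel_measurable M" using lo_meas[OF al] by measurable
  show ?thesis
  proof (cases "u = 1")
    case True
    then show ?thesis using measurable_cong[of M "sX X 1 \<alpha>" "hi \<alpha>" borel] sX_hi[OF al] hi_meas[OF al] by auto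
  next
    case False
    then have "u = -1" using u by auto
    then show ?thesis using measurable_cong[of M "sX X (-1) \<alpha>" "\<lambda>w. - lo \<alpha> w" borel] sX_lo[OF al] m1 by auto
  qed
qed

lemma Med_sX: "u \<in> {-1,1} \<Longrightarrow> \<alpha> \<in> {0..1} \<Longrightarrow> Med M (sX X u \<alpha>) = {med M (sX X u \<alpha>)}"
  using uniq med_single by blast

lemma Med_lo: assumes "\<alpha> \<in> {0..1}" shows "Med M (lo \<alpha>) = {a \<alpha>}"
proof -
  have "Med M (\<lambda>w. - lo \<alpha> w) = Med M (sX X (-1) \<alpha>)"
    using sX_lo[OF assms] by (intro Med_cong) auto
  also have "\<dots> = {med M (sX X (-1) \<alpha>)}" using Med_sX[of "-1" \<alpha>] assms by auto
  finally have "Med M (\<lambda>w. - lo \<alpha> w) = {med M (sX X (-1) \<alpha>)}" .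
  from Med_uminus_single[OF this] show ?thesis unfolding a_def by (simp add: fun_eq_iff)
qed

lemma Med_hi: assumes "\<alpha> \<in> {0..1}" shows "Med M (hi \<alpha>) = {b \<alpha>}"
proof -
  have "Med M (hi \<alpha>) = Med M (sX X 1 \<alpha>)"
    using sX_hi[OF assms] by (intro Med_cong) auto
  also have "\<dots> = {med M (sX X 1 \<alpha>)}" using Med_sX[of "1" \<alpha>] assms by auto
  finally show ?thesis unfolding b_def .
qed

lemma lo_hi_mono: "0 \<le> \<alpha> \<Longrightarrow> \<alpha> \<le> \<beta> \<Longrightarrow> \<beta> \<le> 1 \<Longrightarrow> w \<in> space M \<Longrightarrow> lo \<alpha> w \<le> lo \<beta> w \<and> hi \<beta> w \<le> hi \<alpha> w"
  unfolding lo_def hi_def using Fc_lo_hi_mono[OF XFc] by blast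

lemma ab_mono:
  assumes "0 \<le> \<alpha>" "\<alpha> \<le> \<beta>" "\<beta> \<le> 1"
  shows "a \<alpha> \<le> a \<beta>" "b \<beta> \<le> b \<alpha>"
proof -
  have al: "\<alpha> \<in> {0..1}" and be: "\<beta> \<in> {0..1}" using assms by auto
  show "a \<alpha> \<le> a \<beta>"
    by (rule med_compare[OF lo_meas[OF al] lo_meas[OF be] _ Med_lo[OF al] Med_lo[OF be]])
       (use lo_hi_mono[OF assms] in auto)
  show "b \<beta> \<le> b \<alpha>"
    by (rule med_compare[OF hi_meas[OF be] hi_meas[OF al] _ Med_hi[OF be] Med_hi[OF al]])
       (use lo_hi_mono[OF assms] in auto)
qed

lemma a_le_b: assumes "\<alpha> \<in> {0..1}" shows "a \<alpha> \<le> b \<alpha>"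
  by (rule med_compare[OF lo_meas[OF assms] hi_meas[OF assms] _ Med_lo[OF assms] Med_hi[OF assms]])
     (use lev assms in auto)

lemma Med_le_half: "c \<in> Med M Y \<Longrightarrow> prob {w\<in>space M. Y w \<le> c} \<ge> 1/2"
  and Med_ge_half: "c \<in> Med M Y \<Longrightarrow> prob {w\<in>space M. c \<le> Y w} \<ge> 1/2"
  unfolding Med_def by auto

lemma a_left:
  assumes "0 < \<alpha>" "\<alpha> \<le> 1" and h: "\<And>\<beta>. 0 < \<beta> \<Longrightarrow> \<beta> < \<alpha> \<Longrightarrow> a \<beta> \<le> t"
  shows "a \<alpha> \<le> t"
proof (rule ccontr)
  assume "\<not> a \<alpha> \<le> t"
  have al: "\<alpha> \<in> {0..1}" using assms by auto
  define \<beta> where "\<beta> n = \<alpha> - \<alpha> / (real n + 2)" for n :: nat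
  have bpos: "0 < \<beta> n" "\<beta> n < \<alpha>" for n
  proof -
    have "\<alpha> / (real n + 2) < \<alpha>" using assms(1) by (simp add: divide_less_eq)
    moreover have "\<alpha> / (real n + 2) > 0" using assms(1) by simp
    ultimately show "0 < \<beta> n" "\<beta> n < \<alpha>" unfolding \<beta>_def by auto
  qed
  have bI: "\<beta> n \<in> {0..1}" for n using bpos[of n] assms by auto
  have "prob {w\<in>space M. lo \<alpha> w \<le> t} \<ge> 1/2"
  proof (rule dec_half)
    define S where "S n = {w\<in>space M. lo (\<beta> n) w \<le> t}" for n
    show "range S \<subseteq> events" unfolding S_def using meas_le[OF lo_meas[OF bI]] by auto
    show "decseq S" unfolding decseq_def S_def
    proof (intro allI impI subsetI)
      fix m n :: nat and w assume "m \<le> n" and w: "w \<in> {w\<in>space M. lo (\<beta> n) w \<le> t}"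
      then have "\<alpha> / (real n + 2) \<le> \<alpha> / (real m + 2)"
        using assms(1) by (intro divide_left_mono) auto
      then have "\<beta> m \<le> \<beta> n" unfolding \<beta>_def by simp
      then have "lo (\<beta> m) w \<le> lo (\<beta> n) w" using lo_hi_mono[of "\<beta> m" "\<beta> n" w] bpos[of m] bI[of n] w by auto
      then show "w \<in> {w\<in>space M. lo (\<beta> m) w \<le> t}" using w by auto
    qed
    show "prob (S n) \<ge> 1/2" for n
    proof -
      have "prob {w\<in>space M. lo (\<beta> n) w \<le> a (\<beta> n)} \<ge> 1/2"
        using Med_le_half Med_lo[OF bI[of n]] by auto
      also have "prob {w\<in>space M. lo (\<beta> n) w \<le> a (\<beta> n)} \<le> prob (S n)"
        unfolding S_def using h[OF bpos(1)[of n] bpos(2)[of n]]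
        by (intro finite_measure_mono meas_le[OF lo_meas[OF bI]]) auto
      finally show ?thesis .
    qed
    show "(\<Inter>n. S n) \<subseteq> {w\<in>space M. lo \<alpha> w \<le> t}"
    proof
      fix w assume w: "w \<in> (\<Inter>n. S n)"
      then have ws: "w \<in> space M" unfolding S_def by auto
      have "level (X w) (\<alpha> - \<alpha> / (real n + 2)) \<inter> {..t} \<noteq> {}" for n
      proof -
        have "lo (\<beta> n) w \<le> t" using w unfolding S_def by auto
        then have "lo (\<beta> n) w \<in> level (X w) (\<beta> n) \<inter> {..t}" using lev[OF ws bI[of n]] by auto
        then show ?thesis unfolding \<beta>_def by blast
      qed
      then have "level (X w) \<alpha> \<inter> {..t} \<noteq> {}"
        by (intro level_left_cont[OF XFc[OF ws] assms(1,2)]) auto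
      then have "lo \<alpha> w \<le> t" using lev[OF ws al] by auto
      then show "w \<in> {w\<in>space M. lo \<alpha> w \<le> t}" using ws by auto
    qed
    show "{w\<in>space M. lo \<alpha> w \<le> t} \<in> events" by (rule meas_le[OF lo_meas[OF al]])
  qed
  moreover have "prob {w\<in>space M. t \<le> lo \<alpha> w} \<ge> 1/2"
  proof -
    have "prob {w\<in>space M. a \<alpha> \<le> lo \<alpha> w} \<ge> 1/2" using Med_ge_half Med_lo[OF al] by auto
    also have "prob {w\<in>space M. a \<alpha> \<le> lo \<alpha> w} \<le> prob {w\<in>space M. t \<le> lo \<alpha> w}"
      using \<open>\<not> a \<alpha> \<le> t\<close> by (intro finite_measure_mono meas_ge[OF lo_meas[OF al]]) auto
    finally show ?thesis .
  qed
  ultimately have "t \<in> Med M (lo \<alpha>)" unfolding Med_def by auto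
  then show False using Med_lo[OF al] \<open>\<not> a \<alpha> \<le> t\<close> by auto
qed

lemma b_left:
  assumes "0 < \<alpha>" "\<alpha> \<le> 1" and h: "\<And>\<beta>. 0 < \<beta> \<Longrightarrow> \<beta> < \<alpha> \<Longrightarrow> t \<le> b \<beta>"
  shows "t \<le> b \<alpha>"
proof (rule ccontr)
  assume "\<not> t \<le> b \<alpha>"
  have al: "\<alpha> \<in> {0..1}" using assms by auto
  define \<beta> where "\<beta> n = \<alpha> - \<alpha> / (real n + 2)" for n :: nat
  have bpos: "0 < \<beta> n" "\<beta> n < \<alpha>" for n
  proof -
    have "\<alpha> / (real n + 2) < \<alpha>" using assms(1) by (simp add: divide_less_eq)
    moreover have "\<alpha> / (real n + 2) > 0" using assms(1) by simp
    ultimately show "0 < \<beta> n" "\<beta> n < \<alpha>" unfolding \<beta>_def by auto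
  qed
  have bI: "\<beta> n \<in> {0..1}" for n using bpos[of n] assms by auto
  have "prob {w\<in>space M. t \<le> hi \<alpha> w} \<ge> 1/2"
  proof (rule dec_half)
    define S where "S n = {w\<in>space M. t \<le> hi (\<beta> n) w}" for n
    show "range S \<subseteq> events" unfolding S_def using meas_ge[OF hi_meas[OF bI]] by auto
    show "decseq S" unfolding decseq_def S_def
    proof (intro allI impI subsetI)
      fix m n :: nat and w assume "m \<le> n" and w: "w \<in> {w\<in>space M. t \<le> hi (\<beta> n) w}"
      then have "\<alpha> / (real n + 2) \<le> \<alpha> / (real m + 2)"
        using assms(1) by (intro divide_left_mono) auto
      then have "\<beta> m \<le> \<beta> n" unfolding \<beta>_def by simp
      then have "hi (\<beta> n) w \<le> hi (\<beta> m) w" using lo_hi_mono[of "\<beta> m" "\<beta> n" w] bpos[of m] bI[of n] w by auto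
      then show "w \<in> {w\<in>space M. t \<le> hi (\<beta> m) w}" using w by auto
    qed
    show "prob (S n) \<ge> 1/2" for n
    proof -
      have "prob {w\<in>space M. b (\<beta> n) \<le> hi (\<beta> n) w} \<ge> 1/2"
        using Med_ge_half Med_hi[OF bI[of n]] by auto
      also have "prob {w\<in>space M. b (\<beta> n) \<le> hi (\<beta> n) w} \<le> prob (S n)"
        unfolding S_def using h[OF bpos(1)[of n] bpos(2)[of n]]
        by (intro finite_measure_mono meas_ge[OF hi_meas[OF bI]]) auto
      finally show ?thesis .
    qed
    show "(\<Inter>n. S n) \<subseteq> {w\<in>space M. t \<le> hi \<alpha> w}"
    proof
      fix w assume w: "w \<in> (\<Inter>n. S n)"
      then have ws: "w \<in> space M" unfolding S_def by auto
      have "level (X w) (\<alpha> - \<alpha> / (real n + 2)) \<inter> {t..} \<noteq> {}" for n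
      proof -
        have "t \<le> hi (\<beta> n) w" using w unfolding S_def by auto
        then have "hi (\<beta> n) w \<in> level (X w) (\<beta> n) \<inter> {t..}" using lev[OF ws bI[of n]] by auto
        then show ?thesis unfolding \<beta>_def by blast
      qed
      then have "level (X w) \<alpha> \<inter> {t..} \<noteq> {}"
        by (intro level_left_cont[OF XFc[OF ws] assms(1,2)]) auto
      then have "t \<le> hi \<alpha> w" using lev[OF ws al] by auto
      then show "w \<in> {w\<in>space M. t \<le> hi \<alpha> w}" using ws by auto
    qed
    show "{w\<in>space M. t \<le> hi \<alpha> w} \<in> events" by (rule meas_ge[OF hi_meas[OF al]])
  qed
  moreover have "prob {w\<in>space M. hi \<alpha> w \<le> t} \<ge> 1/2"
  proof -
    have "prob {w\<in>space M. hi \<alpha> w \<le> b \<alpha>} \<ge> 1/2" using Med_le_half Med_hi[OF al] by auto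
    also have "prob {w\<in>space M. hi \<alpha> w \<le> b \<alpha>} \<le> prob {w\<in>space M. hi \<alpha> w \<le> t}"
      using \<open>\<not> t \<le> b \<alpha>\<close> by (intro finite_measure_mono meas_le[OF hi_meas[OF al]]) auto
    finally show ?thesis .
  qed
  ultimately have "t \<in> Med M (hi \<alpha>)" unfolding Med_def by auto
  then show False using Med_hi[OF al] \<open>\<not> t \<le> b \<alpha>\<close> by auto
qed

end


context frv begin

lemma a_right0:
  assumes h: "\<And>\<alpha>. 0 < \<alpha> \<Longrightarrow> \<alpha> \<le> 1 \<Longrightarrow> t \<le> a \<alpha>"
  shows "t \<le> a 0"
proof (rule ccontr)
  assume "\<not> t \<le> a 0"
  have z: "(0::real) \<in> {0..1}" by simp
  define \<beta> where "\<beta> n = 1 / (real n + 1)" for n :: nat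
  have bpos: "0 < \<beta> n" "\<beta> n \<le> 1" for n unfolding \<beta>_def by auto
  have bI: "\<beta> n \<in> {0..1}" for n using bpos[of n] by auto
  have "prob {w\<in>space M. t \<le> lo 0 w} \<ge> 1/2"
  proof (rule dec_half)
    define S where "S n = {w\<in>space M. t \<le> lo (\<beta> n) w}" for n
    show "range S \<subseteq> events" unfolding S_def using meas_ge[OF lo_meas[OF bI]] by auto
    show "decseq S" unfolding decseq_def S_def
    proof (intro allI impI subsetI)
      fix m n :: nat and w assume "m \<le> n" and w: "w \<in> {w\<in>space M. t \<le> lo (\<beta> n) w}"
      then have "\<beta> n \<le> \<beta> m" unfolding \<beta>_def by (simp add: frac_le)
      then have "lo (\<beta> n) w \<le> lo (\<beta> m) w" using lo_hi_mono[of "\<beta> n" "\<beta> m" w] bpos[of n] bI[of m] w by auto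
      then show "w \<in> {w\<in>space M. t \<le> lo (\<beta> m) w}" using w by auto
    qed
    show "prob (S n) \<ge> 1/2" for n
    proof -
      have "prob {w\<in>space M. a (\<beta> n) \<le> lo (\<beta> n) w} \<ge> 1/2"
        using Med_ge_half Med_lo[OF bI[of n]] by auto
      also have "prob {w\<in>space M. a (\<beta> n) \<le> lo (\<beta> n) w} \<le> prob (S n)"
        unfolding S_def using h[OF bpos(1)[of n] bpos(2)[of n]]
        by (intro finite_measure_mono meas_ge[OF lo_meas[OF bI]]) auto
      finally show ?thesis .
    qed
    show "(\<Inter>n. S n) \<subseteq> {w\<in>space M. t \<le> lo 0 w}"
    proof
      fix w assume w: "w \<in> (\<Inter>n. S n)"
      then have ws: "w \<in> space M" unfolding S_def by auto
      have "level (X w) (1 / (real n + 1)) \<subseteq> {t..}" for n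
      proof -
        have "t \<le> lo (\<beta> n) w" using w unfolding S_def by auto
        then show ?thesis using lev[OF ws bI[of n]] unfolding \<beta>_def by auto
      qed
      then have "level (X w) 0 \<subseteq> {t..}" by (intro level0_sub) auto
      then have "t \<le> lo 0 w" using lev[OF ws z] by auto
      then show "w \<in> {w\<in>space M. t \<le> lo 0 w}" using ws by auto
    qed
    show "{w\<in>space M. t \<le> lo 0 w} \<in> events" by (rule meas_ge[OF lo_meas[OF z]])
  qed
  moreover have "prob {w\<in>space M. lo 0 w \<le> t} \<ge> 1/2"
  proof -
    have "prob {w\<in>space M. lo 0 w \<le> a 0} \<ge> 1/2" using Med_le_half Med_lo[OF z] by auto
    also have "prob {w\<in>space M. lo 0 w \<le> a 0} \<le> prob {w\<in>space M. lo 0 w \<le> t}"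
      using \<open>\<not> t \<le> a 0\<close> by (intro finite_measure_mono meas_le[OF lo_meas[OF z]]) auto
    finally show ?thesis .
  qed
  ultimately have "t \<in> Med M (lo 0)" unfolding Med_def by auto
  then show False using Med_lo[OF z] \<open>\<not> t \<le> a 0\<close> by auto
qed

lemma b_right0:
  assumes h: "\<And>\<alpha>. 0 < \<alpha> \<Longrightarrow> \<alpha> \<le> 1 \<Longrightarrow> b \<alpha> \<le> t"
  shows "b 0 \<le> t"
proof (rule ccontr)
  assume "\<not> b 0 \<le> t"
  have z: "(0::real) \<in> {0..1}" by simp
  define \<beta> where "\<beta> n = 1 / (real n + 1)" for n :: nat
  have bpos: "0 < \<beta> n" "\<beta> n \<le> 1" for n unfolding \<beta>_def by auto
  have bI: "\<beta> n \<in> {0..1}" for n using bpos[of n] by auto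
  have "prob {w\<in>space M. hi 0 w \<le> t} \<ge> 1/2"
  proof (rule dec_half)
    define S where "S n = {w\<in>space M. hi (\<beta> n) w \<le> t}" for n
    show "range S \<subseteq> events" unfolding S_def using meas_le[OF hi_meas[OF bI]] by auto
    show "decseq S" unfolding decseq_def S_def
    proof (intro allI impI subsetI)
      fix m n :: nat and w assume "m \<le> n" and w: "w \<in> {w\<in>space M. hi (\<beta> n) w \<le> t}"
      then have "\<beta> n \<le> \<beta> m" unfolding \<beta>_def by (simp add: frac_le)
      then have "hi (\<beta> m) w \<le> hi (\<beta> n) w" using lo_hi_mono[of "\<beta> n" "\<beta> m" w] bpos[of n] bI[of m] w by auto
      then show "w \<in> {w\<in>space M. hi (\<beta> m) w \<le> t}" using w by auto
    qed
    show "prob (S n) \<ge> 1/2" for n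
    proof -
      have "prob {w\<in>space M. hi (\<beta> n) w \<le> b (\<beta> n)} \<ge> 1/2"
        using Med_le_half Med_hi[OF bI[of n]] by auto
      also have "prob {w\<in>space M. hi (\<beta> n) w \<le> b (\<beta> n)} \<le> prob (S n)"
        unfolding S_def using h[OF bpos(1)[of n] bpos(2)[of n]]
        by (intro finite_measure_mono meas_le[OF hi_meas[OF bI]]) auto
      finally show ?thesis .
    qed
    show "(\<Inter>n. S n) \<subseteq> {w\<in>space M. hi 0 w \<le> t}"
    proof
      fix w assume w: "w \<in> (\<Inter>n. S n)"
      then have ws: "w \<in> space M" unfolding S_def by auto
      have "level (X w) (1 / (real n + 1)) \<subseteq> {..t}" for n
      proof -
        have "hi (\<beta> n) w \<le> t" using w unfolding S_def by auto
        then show ?thesis using lev[OF ws bI[of n]] unfolding \<beta>_def by auto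
      qed
      then have "level (X w) 0 \<subseteq> {..t}" by (intro level0_sub) auto
      then have "hi 0 w \<le> t" using lev[OF ws z] by auto
      then show "w \<in> {w\<in>space M. hi 0 w \<le> t}" using ws by auto
    qed
    show "{w\<in>space M. hi 0 w \<le> t} \<in> events" by (rule meas_le[OF hi_meas[OF z]])
  qed
  moreover have "prob {w\<in>space M. t \<le> hi 0 w} \<ge> 1/2"
  proof -
    have "prob {w\<in>space M. b 0 \<le> hi 0 w} \<ge> 1/2" using Med_ge_half Med_hi[OF z] by auto
    also have "prob {w\<in>space M. b 0 \<le> hi 0 w} \<le> prob {w\<in>space M. t \<le> hi 0 w}"
      using \<open>\<not> b 0 \<le> t\<close> by (intro finite_measure_mono meas_ge[OF hi_meas[OF z]]) auto
    finally show ?thesis .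
  qed
  ultimately have "t \<in> Med M (hi 0)" unfolding Med_def by auto
  then show False using Med_hi[OF z] \<open>\<not> b 0 \<le> t\<close> by auto
qed

definition G :: "real \<Rightarrow> real set" where
  "G t = insert 0 {\<alpha>\<in>{0<..1}. a \<alpha> \<le> t \<and> t \<le> b \<alpha>}"

definition A0 :: "real \<Rightarrow> real" where "A0 t = Sup (G t)"

lemma G_bdd: "bdd_above (G t)" unfolding G_def by (rule bdd_aboveI[of _ 1]) auto

lemma A0_ge0: "0 \<le> A0 t"
  unfolding A0_def using G_bdd by (intro cSup_upper) (auto simp: G_def)

lemma A0_le1: "A0 t \<le> 1"
  unfolding A0_def by (intro cSup_least) (auto simp: G_def)

lemma A0_level:
  assumes "0 < \<alpha>" "\<alpha> \<le> 1"
  shows "\<alpha> \<le> A0 t \<longleftrightarrow> a \<alpha> \<le> t \<and> t \<le> b \<alpha>"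
proof
  assume "a \<alpha> \<le> t \<and> t \<le> b \<alpha>"
  then have "\<alpha> \<in> G t" unfolding G_def using assms by auto
  then show "\<alpha> \<le> A0 t" unfolding A0_def using G_bdd by (intro cSup_upper)
next
  assume al: "\<alpha> \<le> A0 t"
  have key: "a \<beta> \<le> t \<and> t \<le> b \<beta>" if "0 < \<beta>" "\<beta> < \<alpha>" for \<beta>
  proof -
    have "\<beta> < Sup (G t)" using al that unfolding A0_def by simp
    then obtain \<gamma> where g: "\<gamma> \<in> G t" "\<beta> < \<gamma>"
      using less_cSup_iff[of "G t" \<beta>] G_bdd by (auto simp: G_def)
    then have g2: "0 < \<gamma>" "\<gamma> \<le> 1" "a \<gamma> \<le> t" "t \<le> b \<gamma>" using that unfolding G_def by auto
    have "a \<beta> \<le> a \<gamma>" "b \<gamma> \<le> b \<beta>" using ab_mono[of \<beta> \<gamma>] that g g2 by auto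
    then show ?thesis using g2 by auto
  qed
  show "a \<alpha> \<le> t \<and> t \<le> b \<alpha>"
    using a_left[OF assms, of t] b_left[OF assms, of t] key by auto
qed

lemma A0_pos: "0 < A0 t \<longleftrightarrow> (\<exists>\<alpha>. 0 < \<alpha> \<and> \<alpha> \<le> 1 \<and> a \<alpha> \<le> t \<and> t \<le> b \<alpha>)"
proof
  assume "0 < A0 t"
  then obtain \<gamma> where g: "\<gamma> \<in> G t" "0 < \<gamma>"
    using less_cSup_iff[of "G t" 0] G_bdd unfolding A0_def by (auto simp: G_def)
  then show "\<exists>\<alpha>. 0 < \<alpha> \<and> \<alpha> \<le> 1 \<and> a \<alpha> \<le> t \<and> t \<le> b \<alpha>" unfolding G_def by auto
next
  assume "\<exists>\<alpha>. 0 < \<alpha> \<and> \<alpha> \<le> 1 \<and> a \<alpha> \<le> t \<and> t \<le> b \<alpha>"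
  then obtain \<alpha> where "0 < \<alpha>" "\<alpha> \<le> 1" "a \<alpha> \<le> t \<and> t \<le> b \<alpha>" by auto
  then show "0 < A0 t" using A0_level[of \<alpha> t] by auto
qed

lemma level_A0_pos: "0 < \<alpha> \<Longrightarrow> \<alpha> \<le> 1 \<Longrightarrow> level A0 \<alpha> = {a \<alpha>..b \<alpha>}"
  unfolding level_def using A0_level by auto

lemma level_A0_0: "level A0 0 = {a 0..b 0}"
proof -
  define U where "U = {x. 0 < A0 x}"
  have z: "(0::real) \<in> {0..1}" by simp
  have UI: "U \<subseteq> {a 0..b 0}"
  proof
    fix x assume "x \<in> U"
    then obtain \<alpha> where "0 < \<alpha>" "\<alpha> \<le> 1" "a \<alpha> \<le> x" "x \<le> b \<alpha>" unfolding U_def A0_pos by auto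
    moreover have "a 0 \<le> a \<alpha>" "b \<alpha> \<le> b 0" using ab_mono[of 0 \<alpha>] calculation by auto
    ultimately show "x \<in> {a 0..b 0}" by auto
  qed
  have IU: "{a 0<..<b 0} \<subseteq> U"
  proof
    fix x assume x: "x \<in> {a 0<..<b 0}"
    obtain \<alpha>1 where a1: "0 < \<alpha>1" "\<alpha>1 \<le> 1" "a \<alpha>1 < x"
      using a_right0[of x] x by force
    obtain \<alpha>2 where a2: "0 < \<alpha>2" "\<alpha>2 \<le> 1" "x < b \<alpha>2"
      using b_right0[of x] x by force
    define \<alpha> where "\<alpha> = min \<alpha>1 \<alpha>2"
    have "a \<alpha> \<le> a \<alpha>1" "b \<alpha>2 \<le> b \<alpha>" unfolding \<alpha>_def using ab_mono a1 a2 by auto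
    moreover have "0 < \<alpha>" "\<alpha> \<le> 1" unfolding \<alpha>_def using a1 a2 by auto
    ultimately show "x \<in> U" unfolding U_def A0_pos using a1 a2 by (intro CollectI exI[of _ \<alpha>]) auto
  qed
  have "closure U = {a 0..b 0}"
  proof
    show "closure U \<subseteq> {a 0..b 0}" using UI by (simp add: closure_minimal)
    show "{a 0..b 0} \<subseteq> closure U"
    proof (cases "a 0 < b 0")
      case True
      then have "closure {a 0<..<b 0} = {a 0..b 0}" by simp
      then show ?thesis using closure_mono[OF IU] by auto
    next
      case False
      then have e: "a 0 = b 0" using a_le_b[OF z] by auto
      have "a 1 \<in> U" unfolding U_def A0_pos using a_le_b[of 1] by (intro CollectI exI[of _ 1]) auto
      then have "U = {a 0}" using UI e by auto
      then show ?thesis using e closure_subset[of U] by auto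
    qed
  qed
  then show ?thesis unfolding level_def U_def by simp
qed

lemma level_A0: "\<alpha> \<in> {0..1} \<Longrightarrow> level A0 \<alpha> = {a \<alpha>..b \<alpha>}"
  using level_A0_pos level_A0_0 by (cases "\<alpha> = 0") auto

lemma A0_Fc: "A0 \<in> Fc"
  unfolding Fc_def is_cinterval_def using A0_ge0 A0_le1 level_A0 a_le_b by blast

lemma supp_A0: "\<alpha> \<in> {0..1} \<Longrightarrow> supp_fun A0 (-1) \<alpha> = med M (sX X (-1) \<alpha>) \<and> supp_fun A0 1 \<alpha> = med M (sX X 1 \<alpha>)"
  using supp_interval[OF level_A0 a_le_b] unfolding a_def b_def by auto

lemma supp_A0': "u \<in> {-1,1} \<Longrightarrow> \<alpha> \<in> {0..1} \<Longrightarrow> supp_fun A0 u \<alpha> = med M (sX X u \<alpha>)"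
  using supp_A0 by auto

lemma med_Si_A0: "med_Si M X = A0"
  unfolding med_Si_def
proof (rule the_equality)
  show "A0 \<in> Fc \<and> (\<forall>u\<in>{-1,1}. \<forall>\<alpha>\<in>{0..1}. supp_fun A0 u \<alpha> = med M (sX X u \<alpha>))"
    using A0_Fc supp_A0' by blast
  fix A assume A: "A \<in> Fc \<and> (\<forall>u\<in>{-1,1}. \<forall>\<alpha>\<in>{0..1}. supp_fun A u \<alpha> = med M (sX X u \<alpha>))"
  show "A = A0" using A supp_A0 by (intro Fc_eq_supp[OF _ A0_Fc]) auto
qed

lemma Med_s_A0: "Med_s M X = {A0}"
proof -
  have "A \<in> Med_s M X \<longleftrightarrow> A = A0" for A
  proof
    assume "A \<in> Med_s M X"
    then have A: "A \<in> Fc" "\<forall>u\<in>{-1,1}. \<forall>\<alpha>\<in>{0..1}. supp_fun A u \<alpha> = med M (sX X u \<alpha>)"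
      unfolding Med_s_def using Med_sX by auto
    show "A = A0" using A supp_A0 by (intro Fc_eq_supp[OF _ A0_Fc]) auto
  next
    assume "A = A0"
    then show "A \<in> Med_s M X" unfolding Med_s_def using A0_Fc supp_A0' Med_sX by auto
  qed
  then show ?thesis by auto
qed

end


context frv begin

lemma X01: "w \<in> space M \<Longrightarrow> 0 \<le> X w x \<and> X w x \<le> 1"
  using XFc unfolding Fc_def by auto

lemma Inf_bounds:
  "0 \<le> Inf ((\<lambda>w. X w (Y w)) ` space M) \<and> Inf ((\<lambda>w. X w (Y w)) ` space M) \<le> 1"
proof
  show "0 \<le> Inf ((\<lambda>w. X w (Y w)) ` space M)"
    using not_empty X01 by (intro cInf_greatest) auto
  obtain w0 where w0: "w0 \<in> space M" using not_empty by auto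
  have "Inf ((\<lambda>w. X w (Y w)) ` space M) \<le> X w0 (Y w0)"
    using w0 X01 by (intro cInf_lower) (auto intro!: bdd_belowI[of _ 0])
  then show "Inf ((\<lambda>w. X w (Y w)) ` space M) \<le> 1" using X01[OF w0, of "Y w0"] by linarith
qed

lemma med_Gr_A0: "med_Gr M X = A0"
proof (rule ext)
  fix t
  define GG where "GG = {Inf ((\<lambda>\<omega>. X \<omega> (Y \<omega>)) ` space M) | Y. Y \<in> borel_measurable M \<and> t \<in> Med M Y}"
  have eq: "med_Gr M X t = Sup GG" unfolding med_Gr_def GG_def by simp
  have const: "Inf ((\<lambda>\<omega>. X \<omega> t) ` space M) \<in> GG"
  proof -
    have "{w\<in>space M. t \<le> t} = space M" by auto
    then have "t \<in> Med M (\<lambda>_. t)" unfolding Med_def using prob_space by auto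
    then show ?thesis unfolding GG_def by force
  qed
  have ne: "GG \<noteq> {}" using const by auto
  have bdd: "bdd_above GG" unfolding GG_def using Inf_bounds by (intro bdd_aboveI[of _ 1]) auto
  have "Sup GG \<le> A0 t"
  proof (rule cSup_least[OF ne])
    fix g assume "g \<in> GG"
    then obtain Y where Y: "Y \<in> borel_measurable M" "t \<in> Med M Y"
      and g: "g = Inf ((\<lambda>\<omega>. X \<omega> (Y \<omega>)) ` space M)" unfolding GG_def by auto
    show "g \<le> A0 t"
    proof (cases "g \<le> 0")
      case True then show ?thesis using A0_ge0[of t] by auto
    next
      case False
      then have gp: "0 < g" "g \<le> 1" using Inf_bounds[of Y] g by auto
      have gI: "g \<in> {0..1}" using gp by auto
      have "g \<le> X w (Y w)" if "w \<in> space M" for w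
        unfolding g using that X01 by (intro cInf_lower) (auto intro!: bdd_belowI[of _ 0])
      then have "Y w \<in> level (X w) g" if "w \<in> space M" for w
        unfolding level_def using that gp by auto
      then have Yin: "lo g w \<le> Y w \<and> Y w \<le> hi g w" if "w \<in> space M" for w
        using lev[OF that gI] that by auto
      have "a g \<le> t"
      proof (rule ccontr)
        assume c: "\<not> a g \<le> t"
        have "prob {w\<in>space M. Y w \<le> t} \<ge> 1/2" using Med_le_half[OF Y(2)] .
        also have "prob {w\<in>space M. Y w \<le> t} \<le> prob {w\<in>space M. lo g w \<le> t}"
          using Yin by (intro finite_measure_mono meas_le[OF lo_meas[OF gI]]) (auto intro: order_trans)
        finally have h1: "prob {w\<in>space M. lo g w \<le> t} \<ge> 1/2" .
        have "prob {w\<in>space M. a g \<le> lo g w} \<ge> 1/2" using Med_ge_half Med_lo[OF gI] by auto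
        also have "prob {w\<in>space M. a g \<le> lo g w} \<le> prob {w\<in>space M. t \<le> lo g w}"
          using c by (intro finite_measure_mono meas_ge[OF lo_meas[OF gI]]) auto
        finally have "t \<in> Med M (lo g)" using h1 unfolding Med_def by auto
        then show False using Med_lo[OF gI] c by auto
      qed
      moreover have "t \<le> b g"
      proof (rule ccontr)
        assume c: "\<not> t \<le> b g"
        have "prob {w\<in>space M. t \<le> Y w} \<ge> 1/2" using Med_ge_half[OF Y(2)] .
        also have "prob {w\<in>space M. t \<le> Y w} \<le> prob {w\<in>space M. t \<le> hi g w}"
          using Yin by (intro finite_measure_mono meas_ge[OF hi_meas[OF gI]]) (auto intro: order_trans)
        finally have h1: "prob {w\<in>space M. t \<le> hi g w} \<ge> 1/2" .
        have "prob {w\<in>space M. hi g w \<le> b g} \<ge> 1/2" using Med_le_half Med_hi[OF gI] by auto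
        also have "prob {w\<in>space M. hi g w \<le> b g} \<le> prob {w\<in>space M. hi g w \<le> t}"
          using c by (intro finite_measure_mono meas_le[OF hi_meas[OF gI]]) auto
        finally have "t \<in> Med M (hi g)" using h1 unfolding Med_def by auto
        then show False using Med_hi[OF gI] c by auto
      qed
      ultimately show ?thesis using A0_level[OF gp] by auto
    qed
  qed
  moreover have "A0 t \<le> Sup GG"
  proof (cases "A0 t = 0")
    case True
    have "0 \<le> Inf ((\<lambda>\<omega>. X \<omega> t) ` space M)" using Inf_bounds[of "\<lambda>_. t"] by auto
    also have "\<dots> \<le> Sup GG" using const bdd by (rule cSup_upper)
    finally show ?thesis using True by simp
  next
    case False
    define \<alpha> where "\<alpha> = A0 t"
    have ap: "0 < \<alpha>" "\<alpha> \<le> 1" unfolding \<alpha>_def using False A0_ge0[of t] A0_le1[of t] by auto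
    have al: "\<alpha> \<in> {0..1}" using ap by auto
    have abt: "a \<alpha> \<le> t" "t \<le> b \<alpha>" using A0_level[OF ap, of t] unfolding \<alpha>_def by auto
    define Y where "Y w = max (lo \<alpha> w) (min t (hi \<alpha> w))" for w
    have Ym: "Y \<in> borel_measurable M" unfolding Y_def using lo_meas[OF al] hi_meas[OF al] by measurable
    have "prob {w\<in>space M. lo \<alpha> w \<le> a \<alpha>} \<ge> 1/2" using Med_le_half Med_lo[OF al] by auto
    also have "prob {w\<in>space M. lo \<alpha> w \<le> a \<alpha>} \<le> prob {w\<in>space M. Y w \<le> t}"
      using abt unfolding Y_def by (intro finite_measure_mono meas_le[OF Ym[unfolded Y_def]]) auto
    finally have h1: "prob {w\<in>space M. Y w \<le> t} \<ge> 1/2" unfolding Y_def .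
    have "prob {w\<in>space M. b \<alpha> \<le> hi \<alpha> w} \<ge> 1/2" using Med_ge_half Med_hi[OF al] by auto
    also have "prob {w\<in>space M. b \<alpha> \<le> hi \<alpha> w} \<le> prob {w\<in>space M. t \<le> Y w}"
      using abt unfolding Y_def by (intro finite_measure_mono meas_ge[OF Ym[unfolded Y_def]]) auto
    finally have h2: "prob {w\<in>space M. t \<le> Y w} \<ge> 1/2" unfolding Y_def .
    have tY: "t \<in> Med M Y" using h1 h2 unfolding Med_def by auto
    have "\<alpha> \<le> X w (Y w)" if w: "w \<in> space M" for w
    proof -
      have "Y w \<in> level (X w) \<alpha>" using lev[OF w al] unfolding Y_def by auto
      then show ?thesis unfolding level_def using ap by auto
    qed
    then have "\<alpha> \<le> Inf ((\<lambda>\<omega>. X \<omega> (Y \<omega>)) ` space M)"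
      using not_empty by (intro cInf_greatest) auto
    also have "\<dots> \<le> Sup GG" using Ym tY bdd unfolding GG_def by (intro cSup_upper) auto
    finally show ?thesis unfolding \<alpha>_def .
  qed
  ultimately show "med_Gr M X t = A0 t" using eq by simp
qed

lemma MAD_nonneg:
  assumes "u \<in> {-1,1}" "\<alpha> \<in> {0..1}"
  shows "0 \<le> MAD M (sX X u \<alpha>)"
proof -
  have "(\<lambda>w. \<bar>sX X u \<alpha> w - med M (sX X u \<alpha>)\<bar>) \<in> borel_measurable M"
    using sX_meas[OF assms] by measurable
  then show ?thesis unfolding MAD_def by (rule med_nonneg) auto
qed

lemma ratio_nonneg: "0 \<le> d \<Longrightarrow> 0 \<le> m \<Longrightarrow> 0 \<le> ratio_ereal d m"
  unfolding ratio_ereal_def by auto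

lemma ratio_zero: "0 \<le> d \<Longrightarrow> 0 \<le> m \<Longrightarrow> ratio_ereal d m \<le> 0 \<Longrightarrow> d = 0"
  unfolding ratio_ereal_def by (auto split: if_splits simp: divide_le_0_iff)


lemma Outl_nonneg: "0 \<le> Outl M B X"
  unfolding Outl_def
  by (rule SUP_upper2[of "(1,0)"]) (auto intro!: ratio_nonneg MAD_nonneg)

lemma Outl_A0: "Outl M A0 X = 0"
proof (rule order.antisym)
  show "Outl M A0 X \<le> 0" unfolding Outl_def
    by (rule SUP_least) (auto simp: supp_A0' ratio_ereal_def)
qed (rule Outl_nonneg)

lemma DFP_A0: "D_FP M A0 X = 1"
  unfolding D_FP_def Outl_A0 by simp

lemma ereal_le1: assumes "0 \<le> x" shows "1 / (1 + x) \<le> (1::ereal)"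
proof (cases x)
  case (real r)
  then have r: "0 \<le> r" using assms by simp
  have "1 / (1 + x) = ereal (1 / (1 + r))"
    unfolding real one_ereal_def using r by simp
  also have "\<dots> \<le> 1" using r by simp
  finally show ?thesis .
qed (use assms in auto)

lemma ereal_ge1: assumes "0 \<le> x" "1 \<le> 1 / (1 + x)" shows "x = (0::ereal)"
proof (cases x)
  case (real r)
  then have r: "0 \<le> r" using assms by simp
  have "1 / (1 + x) = ereal (1 / (1 + r))"
    unfolding real one_ereal_def using r by simp
  then have "1 \<le> 1 / (1 + r)" using assms(2) by simp
  then have "r \<le> 0" using r by (simp add: field_simps)
  then show ?thesis using r real by simp
qed (use assms in auto)

lemma Med_DFP_A0: "Med_DFP M X = {A0}"
proof -
  have "A \<in> Med_DFP M X \<longleftrightarrow> A = A0" for A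
  proof
    assume A: "A \<in> Med_DFP M X"
    then have AF: "A \<in> Fc" unfolding Med_DFP_def by auto
    have "D_FP M A0 X \<le> D_FP M A X" using A A0_Fc unfolding Med_DFP_def by auto
    then have "1 \<le> 1 / (1 + Outl M A X)" unfolding DFP_A0 by (simp add: D_FP_def)
    then have O0: "Outl M A X = 0" using ereal_ge1 Outl_nonneg by blast
    have "supp_fun A u \<alpha> = med M (sX X u \<alpha>)" if "u \<in> {-1,1}" "\<alpha> \<in> {0..1}" for u \<alpha>
    proof -
      have "ratio_ereal \<bar>supp_fun A u \<alpha> - med M (sX X u \<alpha>)\<bar> (MAD M (sX X u \<alpha>)) \<le> Outl M A X"
        unfolding Outl_def using that by (intro SUP_upper2[of "(u, \<alpha>)"]) auto
      then have "\<bar>supp_fun A u \<alpha> - med M (sX X u \<alpha>)\<bar> = 0"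
        using O0 MAD_nonneg[OF that] by (intro ratio_zero) auto
      then show ?thesis by simp
    qed
    then show "A = A0" using supp_A0 by (intro Fc_eq_supp[OF AF A0_Fc]) auto
  next
    assume "A = A0"
    then show "A \<in> Med_DFP M X" unfolding Med_DFP_def
      using A0_Fc DFP_A0 ereal_le1[OF Outl_nonneg] by (auto simp: D_FP_def)
  qed
  then show ?thesis by auto
qed

end

theorem theorem4p7:
  fixes M :: "'w measure" and X :: "'w \<Rightarrow> real \<Rightarrow> real"
  assumes "prob_space M"
    and "fuzzy_random_variable M X"
    and "non_degenerate M X"
    and "\<forall>u\<in>{-1,1::real}. \<forall>\<alpha>\<in>{0..1::real}. \<exists>m. Med M (sX X u \<alpha>) = {m}"
  shows "Med_s M X = Med_DFP M X \<and> Med_DFP M X = {med_Si M X} \<and> {med_Si M X} = {med_Gr M X}"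
proof -
  have "frv M X" unfolding frv_def frv_axioms_def using assms by auto
  then interpret frv M X .
  show ?thesis using Med_s_A0 Med_DFP_A0 med_Si_A0 med_Gr_A0 by simp
qed


end
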